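(* For every $\gamma\in(0,\frac12)$ there is $c=c(\gamma)>0$ such that for every integer $k\ge3$ and every $1\le i\le k-1$, $$e_{i,k},\ p_{0\to1,i,k},\ p_{1\to0,i,k}\in[c,1-c].$$
   Context: $\|u\|$ denotes Hamming weight and $\mathbb{E}\mathrm{ven}_k=\{u\in\mathbb{F}_2^k:\|u\|\text{ even}\}$. For an integer $k\ge2$ and $\gamma\in(0,\frac12)$, $\alpha=\alpha(k,\gamma)$ is the unique $\alpha\in(0,1)$ with $\alpha\frac{(1+\alpha)^{k-1}-(1-\alpha)^{k-1}}{(1+\alpha)^k+(1-\alpha)^k}=\gamma$, and $P_{k,\gamma}$ is the distribution on $\mathbb{F}_2^k$ with $P_{k,\gamma}(u)=\alpha^{\|u\|}/Z$ for $u\in\mathbb{E}\mathrm{ven}_k$ and $0$ otherwise, where $Z=\frac{(1+\alpha)^k+(1-\alpha)^k}{2}$. Define $$p_{0\to1,i,k}=\alpha\frac{(1+\alpha)^{k-i}-(1-\alpha)^{k-i}}{(1+\alpha)^{k-i+1}+(1-\alpha)^{k-i+1}},\qquad p_{1\to0,i,k}=\alpha\frac{(1+\alpha)^{k-i}+(1-\alpha)^{k-i}}{(1+\alpha)^{k-i+1}-(1-\alpha)^{k-i+1}},$$ and $e_{i,k}=\Pr_{u\sim P_{k,\gamma}}\big(u_1+\dots+u_i\text{ is odd}\big)$. *)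

theory Defs
  imports "HOL-Analysis.Analysis"
begin

text \<open>Vectors of F_2^k are represented as boolean lists of length k; True = 1.\<close>

definition cube :: "nat \<Rightarrow> bool list set" where
  "cube k = {u. length u = k}"

definition hw :: "bool list \<Rightarrow> nat" where
  "hw u = length (filter id u)"

definition Even_set :: "nat \<Rightarrow> bool list set" where
  "Even_set k = {u \<in> cube k. even (hw u)}"

definition gamma_of :: "nat \<Rightarrow> real \<Rightarrow> real" where
  "gamma_of k a = a * ((1 + a) ^ (k - 1) - (1 - a) ^ (k - 1)) / ((1 + a) ^ k + (1 - a) ^ k)"

definition alpha :: "nat \<Rightarrow> real \<Rightarrow> real" where
  "alpha k \<gamma> = (THE a. 0 < a \<and> a < 1 \<and> gamma_of k a = \<gamma>)"

definition Zc :: "nat \<Rightarrow> real \<Rightarrow> real" where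
  "Zc k \<gamma> = ((1 + alpha k \<gamma>) ^ k + (1 - alpha k \<gamma>) ^ k) / 2"

definition P :: "nat \<Rightarrow> real \<Rightarrow> bool list \<Rightarrow> real" where
  "P k \<gamma> u = (if u \<in> Even_set k then alpha k \<gamma> ^ hw u / Zc k \<gamma> else 0)"

definition p01 :: "real \<Rightarrow> nat \<Rightarrow> nat \<Rightarrow> real" where
  "p01 \<gamma> i k = (let a = alpha k \<gamma> in
     a * ((1 + a) ^ (k - i) - (1 - a) ^ (k - i)) / ((1 + a) ^ (k - i + 1) + (1 - a) ^ (k - i + 1)))"

definition p10 :: "real \<Rightarrow> nat \<Rightarrow> nat \<Rightarrow> real" where
  "p10 \<gamma> i k = (let a = alpha k \<gamma> in
     a * ((1 + a) ^ (k - i) + (1 - a) ^ (k - i)) / ((1 + a) ^ (k - i + 1) - (1 - a) ^ (k - i + 1)))"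

definition e :: "real \<Rightarrow> nat \<Rightarrow> nat \<Rightarrow> real" where
  "e \<gamma> i k = (\<Sum>u \<in> {u \<in> cube k. odd (hw (take i u))}. P k \<gamma> u)"

end

theory Submission
  imports Defs
begin

lemma finite_cube: "finite (cube n)"
proof -
  have "cube n = {xs. set xs \<subseteq> (UNIV::bool set) \<and> length xs = n}"
    by (auto simp: cube_def)
  then show ?thesis using finite_lists_length_eq[of "UNIV::bool set" n] by simp
qed

lemma cube_Suc: "cube (Suc n) = (Cons True) ` cube n \<union> (Cons False) ` cube n"
proof
  show "cube (Suc n) \<subseteq> (Cons True) ` cube n \<union> (Cons False) ` cube n"
  proof
    fix u assume "u \<in> cube (Suc n)"
    then obtain b v where "u = b # v" "length v = n"
      by (cases u) (auto simp: cube_def)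
    then show "u \<in> (Cons True) ` cube n \<union> (Cons False) ` cube n"
      by (cases b) (auto simp: cube_def)
  qed
qed (auto simp: cube_def)

lemma hw_simps[simp]: "hw [] = 0" "hw (True # u) = Suc (hw u)" "hw (False # u) = hw u"
  "hw (x @ y) = hw x + hw y"
  by (auto simp: hw_def)

lemma cube_sums:
  fixes a :: real
  shows "(\<Sum>u\<in>cube n. if odd (hw u) then a ^ hw u else 0) = ((1+a)^n - (1-a)^n)/2 \<and>
         (\<Sum>u\<in>cube n. if even (hw u) then a ^ hw u else 0) = ((1+a)^n + (1-a)^n)/2"
proof (induction n)
  case 0
  have "cube 0 = {[]}" by (auto simp: cube_def)
  then show ?case by simp
next
  case (Suc n)
  have d: "(Cons True) ` cube n \<inter> (Cons False) ` cube n = {}" by auto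
  have fin: "finite ((Cons b) ` cube n)" for b using finite_cube by simp
  have s: "(\<Sum>u\<in>cube (Suc n). f u) = (\<Sum>v\<in>cube n. f (True # v)) + (\<Sum>v\<in>cube n. f (False # v))"
    for f :: "bool list \<Rightarrow> real"
    unfolding cube_Suc
    by (subst sum.union_disjoint[OF fin fin d], simp add: sum.reindex)
  let ?O = "\<Sum>u\<in>cube n. if odd (hw u) then a ^ hw u else 0"
  let ?E = "\<Sum>u\<in>cube n. if even (hw u) then a ^ hw u else 0"
  have t1: "(\<Sum>v\<in>cube n. if odd (hw (True#v)) then a ^ hw (True#v) else 0) = a * ?E"
    unfolding sum_distrib_left by (rule sum.cong) auto
  have t2: "(\<Sum>v\<in>cube n. if even (hw (True#v)) then a ^ hw (True#v) else 0) = a * ?O"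
    unfolding sum_distrib_left by (rule sum.cong) auto
  have t3: "(\<Sum>v\<in>cube n. if odd (hw (False#v)) then a ^ hw (False#v) else 0) = ?O"
    by (rule sum.cong) auto
  have t4: "(\<Sum>v\<in>cube n. if even (hw (False#v)) then a ^ hw (False#v) else 0) = ?E"
    by (rule sum.cong) auto
  show ?case
  proof -
    have o: "?O = ((1+a)^n - (1-a)^n)/2" and ev: "?E = ((1+a)^n + (1-a)^n)/2" using Suc by auto
    show ?thesis unfolding s t1 t2 t3 t4 o ev by (simp add: field_simps)
  qed
qed

lemma cube_append_sum:
  fixes f :: "bool list \<Rightarrow> real"
  shows "(\<Sum>u\<in>cube (i+j). f u) = (\<Sum>x\<in>cube i. \<Sum>y\<in>cube j. f (x @ y))"
proof -
  have img: "cube (i+j) = (\<lambda>(x,y). x @ y) ` (cube i \<times> cube j)"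
  proof
    show "cube (i+j) \<subseteq> (\<lambda>(x,y). x @ y) ` (cube i \<times> cube j)"
    proof
      fix u assume "u \<in> cube (i+j)"
      then have "u = take i u @ drop i u" "take i u \<in> cube i" "drop i u \<in> cube j"
        by (auto simp: cube_def)
      then show "u \<in> (\<lambda>(x,y). x @ y) ` (cube i \<times> cube j)"
        by (metis (no_types, lifting) SigmaI case_prod_conv image_eqI)
    qed
  qed (auto simp: cube_def)
  have inj: "inj_on (\<lambda>(x,y). x @ y) (cube i \<times> cube j)"
    by (auto simp: inj_on_def cube_def)
  show ?thesis
    unfolding img sum.reindex[OF inj] sum.cartesian_product by (simp add: split_def)
qed


lemma e_formula:
  assumes "i \<le> k"
  shows "e \<gamma> i k = (((1 + alpha k \<gamma>)^i - (1 - alpha k \<gamma>)^i)/2) *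
           (((1 + alpha k \<gamma>)^(k-i) - (1 - alpha k \<gamma>)^(k-i))/2) / Zc k \<gamma>"
proof -
  define a where "a = alpha k \<gamma>"
  define Z where "Z = Zc k \<gamma>"
  define j where "j = k - i"
  have kij: "k = i + j" using assms by (simp add: j_def)
  define F where "F = (\<lambda>u::bool list. if odd (hw u) then a ^ hw u else 0)"
  have "e \<gamma> i k = (\<Sum>u\<in>cube k. if odd (hw (take i u)) then P k \<gamma> u else 0)"
    unfolding e_def by (rule sum.inter_filter[OF finite_cube])
  also have "\<dots> = (\<Sum>x\<in>cube i. \<Sum>y\<in>cube j.
      (if odd (hw (take i (x@y))) then P k \<gamma> (x@y) else 0))"
    unfolding kij by (rule cube_append_sum)
  also have "\<dots> = (\<Sum>x\<in>cube i. \<Sum>y\<in>cube j. F x * F y / Z)"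
  proof (rule sum.cong[OF refl], rule sum.cong[OF refl])
    fix x y assume x: "x \<in> cube i" and y: "y \<in> cube j"
    have tk: "take i (x@y) = x" using x by (simp add: cube_def)
    have mem: "(x@y \<in> Even_set k) = even (hw x + hw y)"
      using x y kij by (simp add: Even_set_def cube_def)
    show "(if odd (hw (take i (x@y))) then P k \<gamma> (x@y) else 0) = F x * F y / Z"
      unfolding tk P_def mem F_def a_def[symmetric] Z_def[symmetric]
      by (auto simp: power_add)
  qed
  also have "\<dots> = (\<Sum>x\<in>cube i. F x) * (\<Sum>y\<in>cube j. F y) / Z"
    by (simp add: sum_product sum_divide_distrib)
  finally show ?thesis
    using cube_sums[where n=i and a=a] cube_sums[where n=j and a=a]
    unfolding F_def a_def Z_def j_def by simp
qed


lemma gamma_lt: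
  fixes a :: real
  assumes "0 < a" "a < 1" "1 \<le> k"
  shows "gamma_of k a < a"
proof -
  have D: "0 < (1+a)^k + (1-a)^k" using assms by (simp add: add_pos_nonneg)
  have "(1+a)^(k-1) - (1-a)^(k-1) \<le> (1+a)^(k-1)" using assms by simp
  also have "\<dots> \<le> (1+a)^k" using assms by (intro power_increasing) auto
  also have "\<dots> < (1+a)^k + (1-a)^k" using assms by simp
  finally have "a * ((1+a)^(k-1) - (1-a)^(k-1)) < a * ((1+a)^k + (1-a)^k)"
    using assms by simp
  then show ?thesis unfolding gamma_of_def using D by (simp add: pos_divide_less_eq)
qed

lemma gamma_repr:
  fixes a :: real
  assumes "0 < a" "a < 1" "1 \<le> k"
  shows "gamma_of k a = a/(1+a) * ((1 - ((1-a)/(1+a))^(k-1)) / (1 + ((1-a)/(1+a))^k))"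
proof -
  define p where "p = 1 + a"
  define r where "r = (1-a)/(1+a)"
  have p: "0 < p" using assms by (simp add: p_def)
  have q: "1 - a = r * p" using p by (simp add: r_def p_def)
  have pk: "p^k = p * p^(k-1)" using assms by (metis Suc_diff_le diff_Suc_1 power_Suc)
  have r0: "0 \<le> r" using assms by (simp add: r_def)
  have "gamma_of k a = a * (p^(k-1) * (1 - r^(k-1))) / (p * p^(k-1) * (1 + r^k))"
    unfolding gamma_of_def q p_def[symmetric] pk[symmetric]
    by (simp add: power_mult_distrib algebra_simps)
  also have "\<dots> = a/p * ((1 - r^(k-1)) / (1 + r^k))"
  proof -
    have P: "p^(k-1) \<noteq> 0" using p by simp
    have Y: "1 + r^k \<noteq> 0" using r0 by (metis add_pos_nonneg less_numeral_extra(1) order_less_irrefl zero_le_power)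
    show ?thesis using P Y p by (simp add: divide_simps)
  qed
  finally show ?thesis by (simp add: p_def r_def)
qed

lemma gamma_mono:
  fixes a b :: real
  assumes "0 < a" "a < b" "b < 1" "3 \<le> k"
  shows "gamma_of k a < gamma_of k b"
proof -
  define g where "g = (\<lambda>r::real. (1 - r^(k-1)) / (1 + r^k))"
  define ra where "ra = (1-a)/(1+a)"
  define rb where "rb = (1-b)/(1+b)"
  have rb0: "0 \<le> rb" using assms by (simp add: rb_def)
  have rab: "rb < ra" using assms unfolding ra_def rb_def
    by (simp add: divide_less_eq less_divide_eq field_simps)
  have ra1: "ra < 1" using assms by (simp add: ra_def)
  have ga: "0 < g ra" unfolding g_def using rb0 rab ra1 assms
    by (intro divide_pos_pos) (auto simp: power_less_one_iff add_pos_nonneg)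
  have gab: "g ra \<le> g rb" unfolding g_def
  proof (rule frac_le)
    show "0 \<le> 1 - rb^(k-1)" using rb0 rab ra1 by (simp add: power_le_one)
    show "1 - ra^(k-1) \<le> 1 - rb^(k-1)" using rb0 rab by (simp add: power_mono)
    show "0 < 1 + rb^k" using rb0 by (simp add: add_pos_nonneg)
    show "1 + rb^k \<le> 1 + ra^k" using rb0 rab by (simp add: power_mono)
  qed
  have ab: "a/(1+a) < b/(1+b)" using assms by (simp add: field_simps)
  have "a/(1+a) * g ra < b/(1+b) * g ra" by (rule mult_strict_right_mono[OF ab ga])
  also have "\<dots> \<le> b/(1+b) * g rb" by (rule mult_left_mono[OF gab]) (use assms in simp)
  finally show ?thesis
    using gamma_repr[of a k] gamma_repr[of b k] assms
    unfolding g_def ra_def rb_def by simp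
qed

lemma alpha_props:
  fixes \<gamma> :: real
  assumes "0 < \<gamma>" "\<gamma> < 1/2" "3 \<le> k"
  shows "0 < alpha k \<gamma> \<and> alpha k \<gamma> < 1 \<and> gamma_of k (alpha k \<gamma>) = \<gamma>"
proof -
  have cont: "continuous_on {\<gamma>..1} (gamma_of k)"
  proof -
    have "\<forall>x\<in>{\<gamma>..1}. (1 + x)^k + (1 - x)^k \<noteq> 0"
    proof
      fix x assume "x \<in> {\<gamma>..1}"
      then have "0 < (1 + x)^k + (1 - x)^k" using assms by (simp add: add_pos_nonneg)
      then show "(1 + x)^k + (1 - x)^k \<noteq> 0" by simp
    qed
    then show ?thesis unfolding gamma_of_def by (intro continuous_intros) auto
  qed
  have g1: "gamma_of k 1 = 1/2"
  proof -
    have "(2::real)^k = 2 * 2^(k-1)" using assms by (metis Suc_diff_le diff_Suc_1 le_trans one_le_numeral power_Suc Suc_leI zero_less_numeral le0 le_add_diff_inverse2 nat_le_linear)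
    moreover have "(0::real)^k = 0" "(0::real)^(k-1) = 0" using assms by simp_all
    moreover have "k \<noteq> 0" "k - 1 \<noteq> 0" using assms by simp_all
    ultimately show ?thesis unfolding gamma_of_def by (simp add: power_0_left)
  qed
  have gl: "gamma_of k \<gamma> < \<gamma>" using gamma_lt[of \<gamma> k] assms by simp
  obtain x where x: "\<gamma> \<le> x" "x \<le> 1" "gamma_of k x = \<gamma>"
    using IVT'[of "gamma_of k" \<gamma> \<gamma> 1] gl g1 cont assms by auto
  have x1: "x < 1" using x g1 assms by (cases "x = 1") auto
  have ex: "\<exists>!a. 0 < a \<and> a < 1 \<and> gamma_of k a = \<gamma>"
  proof
    show "0 < x \<and> x < 1 \<and> gamma_of k x = \<gamma>" using x x1 assms by auto
  next
    fix y assume y: "0 < y \<and> y < 1 \<and> gamma_of k y = \<gamma>"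
    show "y = x"
    proof (rule ccontr)
      assume "y \<noteq> x"
      then consider "y < x" | "x < y" by linarith
      then show False
        using gamma_mono[of y x k] gamma_mono[of x y k] x x1 y assms by cases auto
    qed
  qed
  show ?thesis unfolding alpha_def using theI'[OF ex] .
qed


lemma pow_diff_ge:
  fixes p q :: real
  assumes "0 \<le> q" "q \<le> p"
  shows "(p - q) * p^n \<le> p^(Suc n) - q^(Suc n)"
proof (induction n)
  case 0 then show ?case by simp
next
  case (Suc n)
  have "p^(Suc (Suc n)) - q^(Suc (Suc n)) = p * (p^(Suc n) - q^(Suc n)) + q^(Suc n) * (p - q)"
    by (simp add: algebra_simps)
  also have "\<dots> \<ge> p * ((p - q) * p^n) + 0"
    using Suc assms by (intro add_mono mult_left_mono mult_nonneg_nonneg) auto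
  finally show ?case by (simp add: algebra_simps)
qed

lemma e_bounds:
  fixes a g :: real
  assumes "0 < g" "g \<le> a" "a < 1" "1 \<le> i" "1 \<le> j"
  defines "X \<equiv> (1+a)^i - (1-a)^i" and "Y \<equiv> (1+a)^j - (1-a)^j"
      and "D \<equiv> (1+a)^(i+j) + (1-a)^(i+j)"
  shows "g^2/4 \<le> (X/2) * (Y/2) / (D/2) \<and> (X/2) * (Y/2) / (D/2) \<le> 1/2"
proof -
  define p where "p = 1 + a"
  define q where "q = 1 - a"
  obtain i' j' where ii: "i = Suc i'" and jj: "j = Suc j'" using assms
    by (metis Suc_le_D One_nat_def)
  have q0: "0 \<le> q" and qp: "q \<le> p" and p0: "0 < p" and p2: "p \<le> 2"
    using assms by (auto simp: p_def q_def)
  have pq: "p - q = 2 * a" by (simp add: p_def q_def)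
  have Xg: "2 * a * p^i' \<le> X" using pow_diff_ge[OF q0 qp, of i'] pq
    unfolding X_def ii p_def q_def by simp
  have Yg: "2 * a * p^j' \<le> Y" using pow_diff_ge[OF q0 qp, of j'] pq
    unfolding Y_def jj p_def q_def by simp
  have a0: "0 < a" using assms by simp
  have X0: "0 \<le> 2 * a * p^i'" using a0 p0 by simp
  have Y0: "0 \<le> 2 * a * p^j'" using a0 p0 by simp
  have XY: "(2 * a * p^i') * (2 * a * p^j') \<le> X * Y"
    by (rule mult_mono[OF Xg Yg]) (use X0 Xg Y0 Yg in auto)
  have Dp: "0 < D" unfolding D_def using q0 p0 by (simp add: p_def q_def add_pos_nonneg)
  have Dle: "D \<le> 2 * p^(i+j)" unfolding D_def p_def[symmetric] q_def[symmetric]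
    using q0 qp by (simp add: power_mono)
  have pij: "p^(i+j) = p^2 * (p^i' * p^j')" unfolding ii jj by (simp add: power_add power2_eq_square)
  have gg: "g^2 \<le> a^2" using assms by (intro power_mono) auto
  have "g^2/4 * D \<le> a^2/4 * (2 * p^(i+j))"
    using gg Dle Dp by (intro mult_mono) auto
  also have "\<dots> = a^2 * p^2 * (p^i' * p^j') / 2" unfolding pij by simp
  also have "\<dots> \<le> a^2 * 4 * (p^i' * p^j') / 2"
  proof -
    have "p^2 \<le> 2^2" using p0 p2 by (intro power_mono) auto
    then show ?thesis using p0 by (intro divide_right_mono mult_right_mono mult_left_mono) auto
  qed
  also have "\<dots> = (2 * a * p^i') * (2 * a * p^j') / 2" by (simp add: power2_eq_square)
  also have "\<dots> \<le> X * Y / 2" using XY by (simp add: mult_ac)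
  finally have low: "g^2/4 * D \<le> X * Y / 2" .
  have "(X/2) * (Y/2) / (D/2) = X * Y / 2 / D" by simp
  then have eq: "(X/2) * (Y/2) / (D/2) = (X * Y / 2) / D" .
  have L: "g^2/4 \<le> (X/2) * (Y/2) / (D/2)" unfolding eq using low Dp by (simp add: le_divide_eq)
  have Xu: "X \<le> p^i" unfolding X_def p_def q_def using q0 by (simp add: q_def)
  have Yu: "Y \<le> p^j" unfolding Y_def p_def q_def using q0 by (simp add: q_def)
  have XYu: "X * Y \<le> p^i * p^j" by (rule mult_mono[OF Xu Yu]) (use X0 Xg Y0 Yg p0 in auto)
  have "X * Y / 2 \<le> D / 2"
  proof -
    have "0 \<le> q^i * q^j" using q0 by simp
    then show ?thesis using XYu unfolding D_def p_def[symmetric] q_def[symmetric]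
      by (simp add: power_add)
  qed
  then have U: "(X/2) * (Y/2) / (D/2) \<le> 1/2" unfolding eq using Dp by (simp add: divide_le_eq)
  show ?thesis using L U by simp
qed


lemma p01_bounds:
  fixes a g :: real
  assumes "0 < g" "g \<le> a" "a < 1" "1 \<le> m"
  defines "N \<equiv> (1+a)^m - (1-a)^m" and "D \<equiv> (1+a)^(m+1) + (1-a)^(m+1)"
  shows "g^2/4 \<le> a * N / D \<and> a * N / D \<le> 1/2"
proof -
  define p where "p = 1 + a"
  define q where "q = 1 - a"
  obtain m' where mm: "m = Suc m'" using assms by (metis Suc_le_D One_nat_def)
  have q0: "0 \<le> q" and qp: "q \<le> p" and p0: "0 < p" and p2: "p \<le> 2"
    using assms by (auto simp: p_def q_def)
  have a0: "0 < a" using assms by simp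
  have pq: "p - q = 2 * a" by (simp add: p_def q_def)
  have Ng: "2 * a * p^m' \<le> N" using pow_diff_ge[OF q0 qp, of m'] pq
    unfolding N_def mm p_def q_def by simp
  have Dp: "0 < D" unfolding D_def using q0 p0 by (simp add: p_def q_def add_pos_nonneg)
  have Dle: "D \<le> 2 * p^(m+1)"
  proof -
    have "q^(m+1) \<le> p^(m+1)" using qp q0 by (rule power_mono)
    then show ?thesis unfolding D_def p_def[symmetric] q_def[symmetric] by simp
  qed
  have pm: "p^(m+1) = p^2 * p^m'" unfolding mm by (simp add: power2_eq_square)
  have gg: "g^2 \<le> a^2" using assms by (intro power_mono) auto
  have "g^2/4 * D \<le> a^2/4 * (2 * p^(m+1))"
    using gg Dle Dp by (intro mult_mono) auto
  also have "\<dots> = a^2 * p^2 * p^m' / 2" unfolding pm by simp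
  also have "\<dots> \<le> a^2 * 4 * p^m' / 2"
  proof -
    have "p^2 \<le> 2^2" using p0 p2 by (intro power_mono) auto
    then show ?thesis using p0 by (intro divide_right_mono mult_right_mono mult_left_mono) auto
  qed
  also have "\<dots> = a * (2 * a * p^m')" by (simp add: power2_eq_square)
  also have "\<dots> \<le> a * N" using Ng a0 by simp
  finally have L: "g^2/4 \<le> a * N / D" using Dp by (simp add: le_divide_eq)
  have Nu: "N \<le> p^m" unfolding N_def p_def q_def using q0 by (simp add: q_def)
  have "a * N \<le> a * p^m" using Nu a0 by simp
  also have "\<dots> \<le> (p * p^m) / 2" using p0 assms by (simp add: p_def field_simps)
  also have "\<dots> \<le> D / 2" using q0 unfolding D_def p_def[symmetric] q_def[symmetric] by simp
  finally have U: "a * N / D \<le> 1/2" using Dp by (simp add: divide_le_eq)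
  show ?thesis using L U by simp
qed

lemma p10_bounds:
  fixes a g :: real
  assumes "0 < g" "g \<le> a" "a < 1" "1 \<le> m"
  defines "N \<equiv> (1+a)^m + (1-a)^m" and "D \<equiv> (1+a)^(m+1) - (1-a)^(m+1)"
  shows "g^2/4 \<le> a * N / D \<and> a * N / D \<le> 1/2"
proof -
  define p where "p = 1 + a"
  define q where "q = 1 - a"
  obtain m' where mm: "m = Suc m'" using assms by (metis Suc_le_D One_nat_def)
  have q0: "0 \<le> q" and qp: "q < p" and p0: "0 < p" and p2: "p \<le> 2"
    using assms by (auto simp: p_def q_def)
  have a0: "0 < a" using assms by simp
  have Dp: "0 < D" unfolding D_def p_def[symmetric] q_def[symmetric]
    using power_strict_mono[OF qp q0, of "m+1"] by simp
  have Du: "D \<le> p * p^m" unfolding D_def p_def[symmetric] q_def[symmetric] using q0 by simp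
  have gg: "g^2 * p \<le> 4 * a"
  proof -
    have "g^2 \<le> a^2" using assms by (intro power_mono) auto
    also have "\<dots> \<le> a" using a0 assms by (simp add: power2_eq_square)
    finally have "g^2 \<le> a" .
    then show ?thesis
    proof -
      have "g^2 * p \<le> a * 2" using \<open>g^2 \<le> a\<close> p2 a0 p0 by (intro mult_mono) auto
      then show ?thesis using a0 by simp
    qed
  qed
  have "g^2/4 * D \<le> g^2/4 * (p * p^m)" using Du by (intro mult_left_mono) auto
  also have "\<dots> = (g^2 * p) / 4 * p^m" by simp
  also have "\<dots> \<le> a * p^m" using gg p0 by (intro mult_right_mono) auto
  also have "\<dots> \<le> a * N" using a0 q0 unfolding N_def p_def[symmetric] q_def[symmetric] by simp
  finally have L: "g^2/4 \<le> a * N / D" using Dp by (simp add: le_divide_eq)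
  have key: "p * q^m \<le> q * p^m"
  proof -
    have "q^m' \<le> p^m'" using q0 qp by (intro power_mono) auto
    then have "p * q * q^m' \<le> p * q * p^m'" using p0 q0 by (intro mult_left_mono) auto
    then show ?thesis unfolding mm by (simp add: mult_ac)
  qed
  have "2 * a * N = (p - q) * (p^m + q^m)" by (simp add: N_def p_def q_def)
  also have "\<dots> = p * p^m - q * q^m - (q * p^m - p * q^m)" by (simp add: algebra_simps)
  also have "\<dots> \<le> D" using key unfolding D_def p_def[symmetric] q_def[symmetric] by simp
  finally have U: "a * N / D \<le> 1/2" using Dp by (simp add: divide_le_eq)
  show ?thesis using L U by simp
qed


theorem mainTheorem13:
  fixes \<gamma> :: real
  assumes "0 < \<gamma>" and "\<gamma> < 1/2"
  shows "\<exists>c>0. \<forall>k i. 3 \<le> k \<longrightarrow> 1 \<le> i \<longrightarrow> i \<le> k - 1 \<longrightarrow>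
           e \<gamma> i k \<in> {c..1-c} \<and> p01 \<gamma> i k \<in> {c..1-c} \<and> p10 \<gamma> i k \<in> {c..1-c}"
proof (intro exI[of _ "\<gamma>^2/4"] conjI allI impI)
  show "0 < \<gamma>^2/4" using assms by simp
  fix k i :: nat
  assume k: "3 \<le> k" and i1: "1 \<le> i" and ik: "i \<le> k - 1"
  define a where "a = alpha k \<gamma>"
  have ap: "0 < a" "a < 1" "gamma_of k a = \<gamma>"
    using alpha_props[OF assms k] unfolding a_def by auto
  have ga: "\<gamma> \<le> a" using gamma_lt[of a k] ap k by simp
  have c12: "1/2 \<le> 1 - \<gamma>^2/4"
  proof -
    have "\<gamma>^2 \<le> (1/2)^2" using assms by (intro power_mono) auto
    then have "\<gamma>^2 \<le> 1/4" by (simp add: power2_eq_square)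
    then show ?thesis by simp
  qed
  define j where "j = k - i"
  have j1: "1 \<le> j" and kij: "i + j = k" using ik k by (auto simp: j_def)
  have eq: "e \<gamma> i k = (((1+a)^i - (1-a)^i)/2) * (((1+a)^j - (1-a)^j)/2)
              / (((1+a)^(i+j) + (1-a)^(i+j))/2)"
  proof -
    have ik': "i \<le> k" using ik k by simp
    show ?thesis unfolding e_formula[OF ik'] Zc_def a_def[symmetric] j_def[symmetric] kij ..
  qed
  have E: "\<gamma>^2/4 \<le> e \<gamma> i k \<and> e \<gamma> i k \<le> 1/2"
    unfolding eq using e_bounds[OF assms(1) ga ap(2) i1 j1] by simp
  have P1: "\<gamma>^2/4 \<le> p01 \<gamma> i k \<and> p01 \<gamma> i k \<le> 1/2"
    unfolding p01_def Let_def a_def[symmetric] j_def[symmetric] Suc_eq_plus1[symmetric]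
    using p01_bounds[OF assms(1) ga ap(2) j1] by simp
  have P2: "\<gamma>^2/4 \<le> p10 \<gamma> i k \<and> p10 \<gamma> i k \<le> 1/2"
    unfolding p10_def Let_def a_def[symmetric] j_def[symmetric]
    using p10_bounds[OF assms(1) ga ap(2) j1] by simp
  show "e \<gamma> i k \<in> {\<gamma>^2/4..1-\<gamma>^2/4}" using E c12 by auto
  show "p01 \<gamma> i k \<in> {\<gamma>^2/4..1-\<gamma>^2/4}" using P1 c12 by auto
  show "p10 \<gamma> i k \<in> {\<gamma>^2/4..1-\<gamma>^2/4}" using P2 c12 by auto
qed

end
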